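(* Consider the deterministic crowd-learning system described in the context, with $N\ge 2$ PoIs and reward rate $\beta>0$. Let $\overline{\Delta}_{\max}^{(\beta)}$ be the average maximum age when every user acts selfishly, and $\overline{\Delta}_{\max}^{(\mathrm{OPT})}$ the minimum average maximum age over all admissible assignment policies. Then the price of anarchy $$\rho(\beta)\triangleq 1-\frac{\overline{\Delta}_{\max}^{(\mathrm{OPT})}}{\overline{\Delta}_{\max}^{(\beta)}}$$ satisfies $$\rho(\beta)\le \frac{p_{\max}}{(N-1)\beta+p_{\max}}=O(1/\beta).$$
   Context: Deterministic crowd-learning model. There are $N\ge 2$ points of interest (PoIs), indexed $n=1,\dots,N$, and time is slotted, $t=0,1,2,\dots$. Each PoI $n$ has a price $p_n[t]\in[p_{\min},p_{\max}]$, where $0<p_{\min}\le p_{\max}$; the price sequence may be arbitrary. The service provider keeps a recorded price $r_n[t]$ for each PoI, with $r_n[0]\in[p_{\min},p_{\max}]$. Each PoI also has an age $\Delta_n[t]\in\{0,1,2,\dots\}$, with finite initial values $\Delta_n[0]$. In every slot exactly one user arrives. That user selects a single PoI, and we write $S_n[t]=1$ if PoI $n$ is selected in slot $t$ and $S_n[t]=0$ otherwise, so that $\sum_n S_n[t]=1$. The selected PoI's record is refreshed: $r_n[t+1]=p_n[t]$ if $S_n[t]=1$, and $r_n[t+1]=r_n[t]$ otherwise. Ages evolve as $$\Delta_n[t+1]=(\Delta_n[t]+1)(1-S_n[t]).$$ Selfish behavior with reward rate $\beta>0$: the user in slot $t$ selects $$n^*[t]\in\arg\max_{n}\big(\beta\Delta_n[t]-r_n[t]\big),$$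 with ties broken arbitrarily. An admissible policy is any rule that, in each slot, chooses the single PoI for that slot's user based on the past history. The average maximum age of a policy is $$\overline{\Delta}_{\max}=\limsup_{T\to\infty}\frac1T\sum_{t=0}^{T-1}\mathbb{E}\Big[\max_n\Delta_n[t]\Big].$$ $\overline{\Delta}_{\max}^{(\beta)}$ denotes this quantity under selfish behavior, and $\overline{\Delta}_{\max}^{(\mathrm{OPT})}$ its infimum over admissible policies. *)

theory Defs
  imports "HOL-Analysis.Analysis" "HOL-Library.Extended_Real"
begin

text \<open>PoIs are indexed by 0..<N. A selection sequence sel maps slot t to the PoI
  chosen by that slot's user (so S_n[t] = 1 iff sel t = n).
  Prices are p n t, initial records r0 n, initial ages D0 n.\<close>

primrec age :: "(nat \<Rightarrow> nat) \<Rightarrow> (nat \<Rightarrow> nat) \<Rightarrow> nat \<Rightarrow> nat \<Rightarrow> nat" where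
  "age D0 sel n 0 = D0 n"
| "age D0 sel n (Suc t) = (if sel t = n then 0 else age D0 sel n t + 1)"

primrec recorded :: "(nat \<Rightarrow> real) \<Rightarrow> (nat \<Rightarrow> nat \<Rightarrow> real) \<Rightarrow> (nat \<Rightarrow> nat) \<Rightarrow> nat \<Rightarrow> nat \<Rightarrow> real" where
  "recorded r0 p sel n 0 = r0 n"
| "recorded r0 p sel n (Suc t) = (if sel t = n then p n t else recorded r0 p sel n t)"

definition admissible :: "nat \<Rightarrow> (nat \<Rightarrow> nat) \<Rightarrow> bool" where
  "admissible N sel \<longleftrightarrow> (\<forall>t. sel t < N)"

definition selfish ::
  "nat \<Rightarrow> real \<Rightarrow> (nat \<Rightarrow> nat) \<Rightarrow> (nat \<Rightarrow> real) \<Rightarrow> (nat \<Rightarrow> nat \<Rightarrow> real) \<Rightarrow> (nat \<Rightarrow> nat) \<Rightarrow> bool" where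
  "selfish N \<beta> D0 r0 p sel \<longleftrightarrow> admissible N sel \<and>
     (\<forall>t. \<forall>m<N. \<beta> * real (age D0 sel m t) - recorded r0 p sel m t
                \<le> \<beta> * real (age D0 sel (sel t) t) - recorded r0 p sel (sel t) t)"

text \<open>Average maximum age (deterministic system, so the expectation is the value itself).\<close>
definition avg_max_age :: "nat \<Rightarrow> (nat \<Rightarrow> nat) \<Rightarrow> (nat \<Rightarrow> nat) \<Rightarrow> ereal" where
  "avg_max_age N D0 sel =
     limsup (\<lambda>T. ereal ((\<Sum>t<T. real (Max ((\<lambda>n. age D0 sel n t) ` {..<N}))) / real T))"

definition opt_avg_max_age :: "nat \<Rightarrow> (nat \<Rightarrow> nat) \<Rightarrow> ereal" where
  "opt_avg_max_age N D0 = (INF sel \<in> {sel. admissible N sel}. avg_max_age N D0 sel)"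

end

theory Submission
  imports Defs
begin


lemma tend_aux: "((\<lambda>T. ereal (B + C / real T)) \<longlongrightarrow> ereal B) sequentially"
proof -
  have "(\<lambda>T. B + C / real T) \<longlonglongrightarrow> B + 0"
    by (intro tendsto_intros)
  then show ?thesis by (intro tendsto_intros) simp
qed

lemma limsup_avg_le:
  fixes f :: "nat \<Rightarrow> real"
  assumes "\<And>t. t \<ge> K \<Longrightarrow> f t \<le> B"
  shows "limsup (\<lambda>T. ereal ((\<Sum>t<T. f t) / real T)) \<le> ereal B"
proof -
  define C where "C = (\<Sum>t<K. max (f t) B - B)"
  have ev: "eventually (\<lambda>T. ereal ((\<Sum>t<T. f t) / real T) \<le> ereal (B + C / real T)) sequentially"
    unfolding eventually_sequentially
  proof (intro exI allI impI)
    fix T assume T: "T \<ge> Suc K"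
    have "(\<Sum>t<T. f t) \<le> (\<Sum>t<T. max (f t) B)" by (intro sum_mono) simp
    also have "\<dots> = (\<Sum>t<T. B) + (\<Sum>t<T. max (f t) B - B)" by (simp add: sum_subtractf)
    also have "(\<Sum>t<T. max (f t) B - B) = C"
      unfolding C_def
      by (rule sum.mono_neutral_right) (use T assms in \<open>auto simp: max_def\<close>)
    finally have "(\<Sum>t<T. f t) \<le> real T * B + C" by simp
    then show "ereal ((\<Sum>t<T. f t) / real T) \<le> ereal (B + C / real T)"
      using T by (simp add: field_simps)
  qed
  have "limsup (\<lambda>T. ereal ((\<Sum>t<T. f t) / real T)) \<le> limsup (\<lambda>T. ereal (B + C / real T))"
    by (rule Limsup_mono[OF ev])
  also have "\<dots> = ereal B" by (rule lim_imp_Limsup[OF _ tend_aux]) simp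
  finally show ?thesis .
qed

lemma limsup_avg_ge:
  fixes f :: "nat \<Rightarrow> real"
  assumes "\<And>t. t \<ge> K \<Longrightarrow> f t \<ge> B"
  shows "limsup (\<lambda>T. ereal ((\<Sum>t<T. f t) / real T)) \<ge> ereal B"
proof -
  define C where "C = (\<Sum>t<K. min (f t) B - B)"
  have ev: "eventually (\<lambda>T. ereal ((\<Sum>t<T. f t) / real T) \<ge> ereal (B + C / real T)) sequentially"
    unfolding eventually_sequentially
  proof (intro exI allI impI)
    fix T assume T: "T \<ge> Suc K"
    have "(\<Sum>t<T. f t) \<ge> (\<Sum>t<T. min (f t) B)" by (intro sum_mono) simp
    moreover have "(\<Sum>t<T. min (f t) B) = (\<Sum>t<T. B) + (\<Sum>t<T. min (f t) B - B)" by (simp add: sum_subtractf)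
    moreover have "(\<Sum>t<T. min (f t) B - B) = C"
      unfolding C_def
      by (rule sum.mono_neutral_right) (use T assms in \<open>auto simp: min_def dest: assms intro: antisym\<close>)
    ultimately have "(\<Sum>t<T. f t) \<ge> real T * B + C" by simp
    then have "(real T * B + C) / real T \<le> (\<Sum>t<T. f t) / real T"
      by (intro divide_right_mono) auto
    moreover have "(real T * B + C) / real T = B + C / real T" using T by (simp add: field_simps)
    ultimately show "ereal ((\<Sum>t<T. f t) / real T) \<ge> ereal (B + C / real T)"
      by simp
  qed
  have "limsup (\<lambda>T. ereal ((\<Sum>t<T. f t) / real T)) \<ge> limsup (\<lambda>T. ereal (B + C / real T))"
    by (rule Limsup_mono[OF ev])
  moreover have "limsup (\<lambda>T. ereal (B + C / real T)) = ereal B" by (rule lim_imp_Limsup[OF _ tend_aux]) simp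
  ultimately show ?thesis by simp
qed

lemma age_lt: "age D0 sel n t < t \<Longrightarrow> sel (t - 1 - age D0 sel n t) = n"
proof (induction t)
  case 0 then show ?case by simp
next
  case (Suc t)
  show ?case
  proof (cases "sel t = n")
    case True then show ?thesis by simp
  next
    case False
    with Suc.prems have "age D0 sel n t < t" by simp
    with Suc.IH False show ?thesis by simp
  qed
qed

lemma age_big: "age D0 sel n (t+j) \<ge> j \<Longrightarrow> age D0 sel n (t+j) = age D0 sel n t + j \<and> (\<forall>u<j. sel (t+u) \<noteq> n)"
proof (induction j)
  case 0 then show ?case by simp
next
  case (Suc j)
  have ne: "sel (t+j) \<noteq> n" using Suc.prems by (auto split: if_splits)
  then have eq: "age D0 sel n (t + Suc j) = age D0 sel n (t+j) + 1" by simp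
  with Suc.prems have "age D0 sel n (t+j) \<ge> j" by simp
  with Suc.IH have "age D0 sel n (t+j) = age D0 sel n t + j \<and> (\<forall>u<j. sel (t+u) \<noteq> n)" by blast
  with eq ne show ?case by (auto simp: less_Suc_eq)
qed

lemma age_after: "sel s1 = m \<Longrightarrow> s1 < s2 \<Longrightarrow> age D0 sel m s2 \<le> s2 - s1 - 1"
proof (induction s2)
  case 0 then show ?case by simp
next
  case (Suc s2)
  show ?case
  proof (cases "s1 = s2")
    case True with Suc.prems show ?thesis by simp
  next
    case False
    with Suc.prems have "s1 < s2" by simp
    with Suc.IH Suc.prems show ?thesis by auto
  qed
qed

lemma rec_range:
  assumes "\<And>n t. n < N \<Longrightarrow> pmin \<le> p n t \<and> p n t \<le> pmax"
    and "\<And>n. n < N \<Longrightarrow> pmin \<le> r0 n \<and> r0 n \<le> pmax" and "n < N"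
  shows "pmin \<le> recorded r0 p sel n t \<and> recorded r0 p sel n t \<le> pmax"
  using assms by (induction t) auto

lemma max_lower:
  assumes "admissible N sel" "N \<ge> 2" "t \<ge> N - 1"
  shows "\<exists>n<N. age D0 sel n t \<ge> N - 1"
proof (rule ccontr)
  assume "\<not> ?thesis"
  then have small: "\<And>n. n < N \<Longrightarrow> age D0 sel n t \<le> N - 2" by force
  define g where "g n = t - 1 - age D0 sel n t" for n
  have sg: "sel (g n) = n" if "n < N" for n
    unfolding g_def using small[OF that] assms by (intro age_lt) linarith
  have "inj_on g {..<N}" by (rule inj_on_inverseI[where g=sel]) (simp add: sg)
  moreover have "g ` {..<N} \<subseteq> {t+1-N..<t}"
    using small assms by (force simp: g_def)
  ultimately have "card {..<N} \<le> card {t+1-N..<t}" by (intro card_inj_on_le) auto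
  with assms show False by simp
qed

lemma age_upper:
  assumes sf: "selfish N \<beta> D0 r0 p sel" and b: "\<beta> > 0" and "pmin \<le> pmax"
    and pr: "\<And>n t. n < N \<Longrightarrow> pmin \<le> p n t \<and> p n t \<le> pmax"
    and r0r: "\<And>n. n < N \<Longrightarrow> pmin \<le> r0 n \<and> r0 n \<le> pmax"
    and t: "t \<ge> N" and n: "n < N"
  shows "real (age D0 sel n t) \<le> real N - 1 + (pmax - pmin) / \<beta>"
proof (cases "age D0 sel n t < N")
  case True
  have "(pmax - pmin) / \<beta> \<ge> 0" using assms by simp
  with True show ?thesis by linarith
next
  case False
  have adm: "\<And>t. sel t < N" using sf by (simp add: selfish_def admissible_def)
  from False have "age D0 sel n ((t - N) + N) \<ge> N" using t by simp
  from age_big[OF this] t have notn: "\<forall>u<N. sel (t - N + u) \<noteq> n" by simp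
  define A where "A = {t-N..<t}"
  have "sel ` A \<subseteq> {..<N} - {n}"
  proof
    fix x assume "x \<in> sel ` A"
    then obtain s where s: "s \<in> A" "x = sel s" by blast
    have "s - (t - N) < N" using s t by (auto simp: A_def)
    then have "sel (t - N + (s - (t - N))) \<noteq> n" using notn by blast
    moreover have "t - N + (s - (t - N)) = s" using s t by (auto simp: A_def)
    ultimately show "x \<in> {..<N} - {n}" using s adm by auto
  qed
  moreover have "card ({..<N} - {n}) < card A" using n t by (simp add: A_def)
  ultimately have "\<not> inj_on sel A"
    using card_inj_on_le[of sel A "{..<N} - {n}"] by fastforce
  then obtain s1 s2 where s12: "s1 \<in> A" "s2 \<in> A" "s1 < s2" "sel s1 = sel s2"
    unfolding inj_on_def by (metis linorder_neqE_nat)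
  define m where "m = sel s2"
  have m: "m < N" using adm by (simp add: m_def)
  have am: "age D0 sel m s2 \<le> s2 - s1 - 1" using age_after[of sel s1 m s2] s12 by (simp add: m_def)
  have "age D0 sel n (s2 + (t - s2)) \<ge> t - s2" using False s12 t by (simp add: A_def)
  from age_big[OF this] s12 have an: "age D0 sel n t = age D0 sel n s2 + (t - s2)" by (simp add: A_def)
  have "\<beta> * real (age D0 sel n s2) - recorded r0 p sel n s2 \<le> \<beta> * real (age D0 sel m s2) - recorded r0 p sel m s2"
    using sf n by (simp add: selfish_def m_def)
  moreover have "recorded r0 p sel n s2 \<le> pmax" "pmin \<le> recorded r0 p sel m s2"
    using rec_range[OF pr r0r n] rec_range[OF pr r0r m] by auto
  ultimately have "\<beta> * real (age D0 sel n s2) \<le> \<beta> * real (age D0 sel m s2) + (pmax - pmin)" by linarith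
  then have "real (age D0 sel n s2) \<le> real (age D0 sel m s2) + (pmax - pmin) / \<beta>"
    using b by (simp add: field_simps)
  moreover have "real (age D0 sel m s2) \<le> real s2 - real s1 - 1" using am s12 by linarith
  moreover have "real (age D0 sel n t) = real (age D0 sel n s2) + real t - real s2" using an s12 by (simp add: A_def)
  moreover have "real s1 \<ge> real t - real N" using s12 t by (simp add: A_def)
  ultimately show ?thesis by linarith
qed


theorem theorem1:
  fixes N :: nat and \<beta> pmin pmax :: real
    and p :: "nat \<Rightarrow> nat \<Rightarrow> real" and r0 :: "nat \<Rightarrow> real"
    and D0 :: "nat \<Rightarrow> nat" and sel :: "nat \<Rightarrow> nat"
  assumes "N \<ge> 2" and "\<beta> > 0"
    and "0 < pmin" and "pmin \<le> pmax"
    and "\<And>n t. n < N \<Longrightarrow> pmin \<le> p n t \<and> p n t \<le> pmax"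
    and "\<And>n. n < N \<Longrightarrow> pmin \<le> r0 n \<and> r0 n \<le> pmax"
    and "selfish N \<beta> D0 r0 p sel"
  shows "\<bar>avg_max_age N D0 sel\<bar> \<noteq> \<infinity> \<and>
         1 - real_of_ereal (opt_avg_max_age N D0) / real_of_ereal (avg_max_age N D0 sel)
           \<le> pmax / ((real N - 1) * \<beta> + pmax)"
proof -
  note asm = assms
  have fin: "finite ((\<lambda>n. age D0 sel' n t) ` {..<N})" for sel' t by simp
  have ne: "(\<lambda>n. age D0 sel' n t) ` {..<N} \<noteq> {}" for sel' t using assms(1) by (simp add: lessThan_empty_iff)
  have lowb: "ereal (real N - 1) \<le> avg_max_age N D0 s" if adm: "admissible N s" for s
  proof -
    have "ereal (real (N - 1)) \<le> avg_max_age N D0 s"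
      unfolding avg_max_age_def
    proof (rule limsup_avg_ge[where K="N - 1"])
      fix t assume t: "N - 1 \<le> t"
      obtain n where n: "n < N" "age D0 s n t \<ge> N - 1" using max_lower[OF adm assms(1) t] by blast
      have "age D0 s n t \<le> Max ((\<lambda>n. age D0 s n t) ` {..<N})"
        by (rule Max_ge) (use n in auto)
      with n have "N - 1 \<le> Max ((\<lambda>n. age D0 s n t) ` {..<N})" by linarith
      then show "real (N - 1) \<le> real (Max ((\<lambda>n. age D0 s n t) ` {..<N}))" by (simp only: of_nat_le_iff)
    qed
    moreover have "real (N - 1) = real N - 1" using assms(1) by simp
    ultimately show ?thesis by simp
  qed
  define c where "c = (pmax - pmin) / \<beta>"
  have c: "c \<le> pmax / \<beta>" using assms(2,3) by (simp add: c_def divide_right_mono)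
  have upb: "avg_max_age N D0 sel \<le> ereal (real N - 1 + c)"
    unfolding avg_max_age_def
  proof (rule limsup_avg_le[where K=N])
    fix t assume t: "N \<le> t"
    obtain n where n: "n \<in> {..<N}" "Max ((\<lambda>n. age D0 sel n t) ` {..<N}) = age D0 sel n t"
      using Max_in[OF fin ne, of sel t] by auto
    show "real (Max ((\<lambda>n. age D0 sel n t) ` {..<N})) \<le> real N - 1 + c"
      unfolding n(2) c_def by (rule age_upper[OF assms(7) assms(2) assms(4) assms(5) assms(6) t]) (use n in auto)
  qed
  have adm: "admissible N sel" using assms(7) by (simp add: selfish_def)
  define S where "S = avg_max_age N D0 sel"
  define Opt where "Opt = opt_avg_max_age N D0"
  have S1: "ereal (real N - 1) \<le> S" using lowb[OF adm] by (simp add: S_def)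
  have S2: "S \<le> ereal (real N - 1 + c)" using upb by (simp add: S_def)
  have O1: "Opt \<le> S" unfolding Opt_def S_def opt_avg_max_age_def by (rule INF_lower) (use adm in simp)
  have O2: "ereal (real N - 1) \<le> Opt" unfolding Opt_def opt_avg_max_age_def by (rule INF_greatest) (use lowb in simp)
  have Sfin: "\<bar>S\<bar> \<noteq> \<infinity>" using S1 S2 by auto
  have Ofin: "\<bar>Opt\<bar> \<noteq> \<infinity>" using O1 O2 Sfin by auto
  define s where "s = real_of_ereal S"
  define ov where "ov = real_of_ereal Opt"
  have Ss: "S = ereal s" using Sfin by (simp add: s_def ereal_real)
  have Oo: "Opt = ereal ov" using Ofin by (simp add: ov_def ereal_real)
  have s1: "real N - 1 \<le> s" using S1 Ss by simp
  have s2: "s \<le> real N - 1 + pmax / \<beta>" using S2 Ss c by simp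
  have o1: "real N - 1 \<le> ov" using O2 Oo by simp
  have N1: "real N - 1 \<ge> 1" using assms(1) by simp
  have spos: "s > 0" using s1 N1 by simp
  have "1 - ov / s \<le> 1 - (real N - 1) / s"
    using o1 spos by (simp add: divide_right_mono)
  also have "(real N - 1) / s \<ge> (real N - 1) / (real N - 1 + pmax / \<beta>)"
    using s2 spos N1 by (intro divide_left_mono) auto
  then have "1 - (real N - 1) / s \<le> 1 - (real N - 1) / (real N - 1 + pmax / \<beta>)" by simp
  also have "\<dots> = pmax / ((real N - 1) * \<beta> + pmax)"
  proof -
    have "real N - 1 + pmax / \<beta> > 0" using N1 assms(2,3,4) by (simp add: add_pos_nonneg)
    moreover have "(real N - 1) * \<beta> + pmax > 0" using N1 assms(2,3,4) by (simp add: add_pos_pos)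
    ultimately show ?thesis using assms(2) by (simp add: field_simps)
  qed
  finally have "1 - ov / s \<le> pmax / ((real N - 1) * \<beta> + pmax)" .
  then show ?thesis using Sfin unfolding S_def Opt_def s_def ov_def by simp
qed

end
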